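(* Let $G$ be an $r$-graph on $n$ vertices and let $\varepsilon>0$. One can delete at most $\varepsilon n^r$ edges from $G$ so that the resulting $r$-graph $G'$ has the following property: for any $\mathbf x,\mathbf y\in\vec E(G')$ that are tightly connected in $G'$, there is a tight walk from $\mathbf x$ to $\mathbf y$ in $G'$ of stretch $sr$ for some integer $s\le(2r+1)\varepsilon^{-r}$.
   Context: An $r$-graph is an $r$-uniform hypergraph. An oriented edge of $G$ is an ordered $r$-tuple $x_1\cdots x_r$ whose underlying set is an edge of $G$; $\vec E(G)$ is the set of oriented edges. $\mathbf x,\mathbf y\in\vec E(G)$ are tightly connected (in $G$) if there is a sequence $\mathbf x=\mathbf z^{(0)},\dots,\mathbf z^{(t)}=\mathbf y$ of oriented edges of $G$ such that consecutive terms differ in at most one coordinate. A tight walk of stretch $\ell$ is a sequence $v_1\cdots v_{\ell+r}$ of (not necessarily distinct) vertices such that $v_{i+1}\cdots v_{i+r}\in\vec E(G)$ for each $0\le i\le\ell$; it is a walk from $v_1\cdots v_r$ to $v_{\ell+1}\cdots v_{\ell+r}$. *)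

theory Defs
  imports Complex_Main
begin

definition r_graph :: "nat \<Rightarrow> 'a set \<Rightarrow> 'a set set \<Rightarrow> bool" where
  "r_graph r V E \<longleftrightarrow> finite V \<and> (\<forall>e\<in>E. e \<subseteq> V \<and> card e = r)"

definition oriented_edges :: "nat \<Rightarrow> 'a set set \<Rightarrow> 'a list set" where
  "oriented_edges r E = {xs. length xs = r \<and> set xs \<in> E}"

definition tight_step :: "nat \<Rightarrow> 'a set set \<Rightarrow> ('a list \<times> 'a list) set" where
  "tight_step r E = {(xs, ys). xs \<in> oriented_edges r E \<and> ys \<in> oriented_edges r E \<and>
      card {i. i < r \<and> xs ! i \<noteq> ys ! i} \<le> 1}"

definition tightly_connected :: "nat \<Rightarrow> 'a set set \<Rightarrow> 'a list \<Rightarrow> 'a list \<Rightarrow> bool" where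
  "tightly_connected r E x y \<longleftrightarrow>
     x \<in> oriented_edges r E \<and> y \<in> oriented_edges r E \<and> (x, y) \<in> (tight_step r E)\<^sup>*"

definition tight_walk :: "nat \<Rightarrow> 'a set set \<Rightarrow> nat \<Rightarrow> 'a list \<Rightarrow> bool" where
  "tight_walk r E l vs \<longleftrightarrow> length vs = l + r \<and>
     (\<forall>i\<le>l. take r (drop i vs) \<in> oriented_edges r E)"

definition tight_walk_from_to :: "nat \<Rightarrow> 'a set set \<Rightarrow> nat \<Rightarrow> 'a list \<Rightarrow> 'a list \<Rightarrow> 'a list \<Rightarrow> bool" where
  "tight_walk_from_to r E l vs x y \<longleftrightarrow> tight_walk r E l vs \<and> take r vs = x \<and> drop l vs = y"

end

theory Submission
  imports Defs
begin

definition codeg :: "'a set set \<Rightarrow> 'a set \<Rightarrow> nat" where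
  "codeg F S = card {u. u \<notin> S \<and> insert u S \<in> F}"

definition goodc :: "real \<Rightarrow> 'a set set \<Rightarrow> bool" where
  "goodc c F \<longleftrightarrow> (\<forall>e\<in>F. \<forall>u\<in>e. c \<le> real (codeg F (e - {u})))"

definition shadow :: "'a set set \<Rightarrow> 'a set set" where
  "shadow F = (\<lambda>(e,u). e - {u}) ` (SIGMA e:F. e)"

lemma shadow_mono: "F1 \<subseteq> F \<Longrightarrow> shadow F1 \<subseteq> shadow F"
  unfolding shadow_def by auto

lemma finite_shadow: "finite F \<Longrightarrow> \<forall>e\<in>F. finite e \<Longrightarrow> finite (shadow F)"
  unfolding shadow_def by (auto intro!: finite_imageI finite_SigmaI)

lemma deletion:
  assumes "r \<ge> 1" "c \<ge> 0"
  shows "finite F \<Longrightarrow> \<forall>e\<in>F. finite e \<and> card e = r \<Longrightarrow>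
    \<exists>F'\<subseteq>F. goodc c F' \<and> real (card (F - F')) \<le> c * real (card (shadow F))"
proof (induction "card F" arbitrary: F rule: less_induct)
  case less
  show ?case
  proof (cases "goodc c F")
    case True then show ?thesis using assms(2) by (intro exI[of _ F]) auto
  next
    case False
    then obtain e u where eu: "e \<in> F" "u \<in> e" "real (codeg F (e - {u})) < c"
      unfolding goodc_def by force
    define S where "S = e - {u}"
    define F1 where "F1 = {e' \<in> F. \<not> S \<subseteq> e'}"
    have F1F: "F1 \<subseteq> F" unfolding F1_def by auto
    have "e \<notin> F1" unfolding F1_def S_def by auto
    hence "F1 \<subset> F" using F1F eu(1) by auto
    hence lt: "card F1 < card F" using less.prems(1) by (simp add: psubset_card_mono)
    have fin1: "finite F1" using F1F less.prems(1) finite_subset by auto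
    from less.hyps[OF lt fin1] less.prems(2) F1F obtain F' where
      F': "F' \<subseteq> F1" "goodc c F'" "real (card (F1 - F')) \<le> c * real (card (shadow F1))"
      by blast
    have fe0: "finite e" "card e = r" using less.prems(2) eu by auto
    have cS: "card S = r - 1" "finite S" using fe0 eu unfolding S_def by auto
    have sub: "F - F1 \<subseteq> (\<lambda>w. insert w S) ` {w. w \<notin> S \<and> insert w S \<in> F}"
    proof
      fix e' assume "e' \<in> F - F1"
      hence e': "e' \<in> F" "S \<subseteq> e'" unfolding F1_def by auto
      have fe: "finite e'" "card e' = r" using less.prems(2) e' by auto
      have "card (e' - S) = 1" using card_Diff_subset[OF cS(2) e'(2)] fe cS assms(1) by simp
      then obtain w where w: "e' - S = {w}" by (auto simp: card_Suc_eq)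
      hence "e' = insert w S" "w \<notin> S" using e'(2) by auto
      thus "e' \<in> (\<lambda>w. insert w S) ` {w. w \<notin> S \<and> insert w S \<in> F}" using e'(1) by auto
    qed
    have finC: "finite {w. w \<notin> S \<and> insert w S \<in> F}"
    proof (rule finite_subset)
      show "{w. w \<notin> S \<and> insert w S \<in> F} \<subseteq> \<Union>F" by auto
      show "finite (\<Union>F)" using less.prems by auto
    qed
    have "card (F - F1) \<le> codeg F S" unfolding codeg_def
      using card_image_le[OF finC, of "\<lambda>w. insert w S"] card_mono[OF finite_imageI[OF finC] sub] by linarith
    hence c1: "real (card (F - F1)) \<le> c" using eu(3) S_def by simp
    have "S \<in> shadow F" unfolding shadow_def S_def using eu by (auto intro!: image_eqI[of _ _ "(e,u)"])
    moreover have "S \<notin> shadow F1" unfolding shadow_def F1_def by auto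
    ultimately have "shadow F1 \<subseteq> shadow F - {S}" using shadow_mono[OF F1F] by auto
    moreover have finsh: "finite (shadow F)" using finite_shadow less.prems by auto
    ultimately have "card (shadow F1) \<le> card (shadow F - {S})" by (intro card_mono) auto
    also have "\<dots> = card (shadow F) - 1" using \<open>S \<in> shadow F\<close> finsh by simp
    finally have sh0: "card (shadow F1) \<le> card (shadow F) - 1" .
    have "card (shadow F) > 0" using \<open>S \<in> shadow F\<close> finsh card_gt_0_iff by blast
    hence sh: "real (card (shadow F1)) + 1 \<le> real (card (shadow F))" using sh0 by linarith
    have "F - F' = (F - F1) \<union> (F1 - F')" using F'(1) F1F by auto
    hence "card (F - F') \<le> card (F - F1) + card (F1 - F')" by (simp add: card_Un_le)
    hence "real (card (F - F')) \<le> c + c * real (card (shadow F1))" using c1 F'(3) by linarith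
    also have "\<dots> = c * (real (card (shadow F1)) + 1)" by (simp add: algebra_simps)
    also have "\<dots> \<le> c * real (card (shadow F))" using sh assms(2) by (intro mult_left_mono) auto
    finally show ?thesis using F' F1F by (intro exI[of _ F']) auto
  qed
qed


lemma OE_props:
  assumes "r_graph r V E" "w \<in> oriented_edges r E"
  shows "length w = r" "distinct w" "set w \<subseteq> V" "set w \<in> E"
proof -
  show l: "length w = r" "set w \<in> E" using assms(2) unfolding oriented_edges_def by auto
  show "set w \<subseteq> V" using assms l unfolding r_graph_def by auto
  have "card (set w) = r" using assms l unfolding r_graph_def by auto
  thus "distinct w" using l by (intro card_distinct) simp
qed

lemma finite_OE: assumes "r_graph r V E"
  shows "finite (oriented_edges r E)" "card (oriented_edges r E) \<le> card V ^ r"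
proof -
  have fV: "finite V" using assms unfolding r_graph_def by auto
  have sub: "oriented_edges r E \<subseteq> {xs. set xs \<subseteq> V \<and> length xs = r}"
    using OE_props[OF assms] by auto
  show "finite (oriented_edges r E)" by (rule finite_subset[OF sub finite_lists_length_eq[OF fV]])
  show "card (oriented_edges r E) \<le> card V ^ r"
    using card_mono[OF finite_lists_length_eq[OF fV] sub] card_lists_length_eq[OF fV] by simp
qed

lemma tight_step_sym: "(a,b) \<in> tight_step r E \<Longrightarrow> (b,a) \<in> tight_step r E"
proof -
  assume "(a,b) \<in> tight_step r E"
  moreover have "{i. i < r \<and> b ! i \<noteq> a ! i} = {i. i < r \<and> a ! i \<noteq> b ! i}" by auto
  ultimately show ?thesis unfolding tight_step_def by auto
qed

lemma relpow_sym:
  assumes "\<And>a b. (a,b) \<in> R \<Longrightarrow> (b,a) \<in> R"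
  shows "(a,b) \<in> R^^m \<Longrightarrow> (b,a) \<in> R^^m"
proof (induction m arbitrary: a b)
  case 0 then show ?case by simp
next
  case (Suc m)
  then obtain c where "(a,c) \<in> R^^m" "(c,b) \<in> R" by auto
  hence "(c,a) \<in> R^^m" "(b,c) \<in> R" using Suc.IH assms by auto
  thus ?case by (rule relpow_Suc_I2[rotated])
qed

lemma window_mix:
  assumes "(z,y) \<in> tight_step r E" "t \<le> r"
  shows "drop t z @ take t y \<in> oriented_edges r E"
proof -
  have z: "z \<in> oriented_edges r E" and y: "y \<in> oriented_edges r E"
    and cd: "card {i. i < r \<and> z ! i \<noteq> y ! i} \<le> 1" using assms(1) unfolding tight_step_def by auto
  have lz: "length z = r" "set z \<in> E" using z unfolding oriented_edges_def by auto
  have ly: "length y = r" "set y \<in> E" using y unfolding oriented_edges_def by auto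
  have len: "length (drop t z @ take t y) = r" using lz ly assms(2) by simp
  show ?thesis
  proof (cases "\<forall>i<t. z ! i = y ! i")
    case True
    have "take t y = take t z" using True lz ly assms(2) by (intro nth_equalityI) auto
    hence "set (drop t z @ take t y) = set z"
      by (metis append_take_drop_id set_append sup_commute)
    thus ?thesis using len lz unfolding oriented_edges_def by auto
  next
    case False
    then obtain i where i: "i < t" "z ! i \<noteq> y ! i" by auto
    have rest: "z ! i' = y ! i'" if "t \<le> i'" "i' < r" for i'
    proof (rule ccontr)
      assume "z ! i' \<noteq> y ! i'"
      hence "{i, i'} \<subseteq> {i. i < r \<and> z ! i \<noteq> y ! i}" using i that assms(2) by auto
      moreover have "finite {i. i < r \<and> z ! i \<noteq> y ! i}" by auto
      ultimately have "card {i, i'} \<le> 1" using cd card_mono by (meson order_trans)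
      moreover have "i \<noteq> i'" using i that by auto
      ultimately show False by simp
    qed
    have "drop t z = drop t y" using rest lz ly assms(2) by (intro nth_equalityI) auto
    hence "set (drop t z @ take t y) = set y"
      by (metis append_take_drop_id set_append sup_commute)
    thus ?thesis using len ly unfolding oriented_edges_def by auto
  qed
qed

lemma walk_lemma:
  assumes "x \<in> oriented_edges r E"
  shows "(x,y) \<in> (tight_step r E)^^k \<Longrightarrow> \<exists>vs. tight_walk_from_to r E (k*r) vs x y"
proof (induction k arbitrary: y)
  case 0
  hence "y = x" by simp
  moreover have "length x = r" using assms unfolding oriented_edges_def by auto
  ultimately show ?case using assms unfolding tight_walk_from_to_def tight_walk_def
    by (intro exI[of _ x]) auto
next
  case (Suc k)
  then obtain z where xz: "(x,z) \<in> (tight_step r E)^^k" and zy: "(z,y) \<in> tight_step r E" by auto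
  from Suc.IH[OF xz] obtain vs where vs: "tight_walk_from_to r E (k*r) vs x z" by blast
  have lv: "length vs = k*r + r" "take r vs = x" "drop (k*r) vs = z"
    and win: "\<forall>i\<le>k*r. take r (drop i vs) \<in> oriented_edges r E"
    using vs unfolding tight_walk_from_to_def tight_walk_def by auto
  have ly: "length y = r" using zy unfolding tight_step_def oriented_edges_def by auto
  have "tight_walk_from_to r E (Suc k * r) (vs @ y) x y"
    unfolding tight_walk_from_to_def tight_walk_def
  proof (intro conjI allI impI)
    show "length (vs @ y) = Suc k * r + r" using lv ly by simp
    show "take r (vs @ y) = x" using lv by simp
    show "drop (Suc k * r) (vs @ y) = y" using lv by simp
    fix i assume i: "i \<le> Suc k * r"
    show "take r (drop i (vs @ y)) \<in> oriented_edges r E"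
    proof (cases "i \<le> k*r")
      case True
      have h: "r \<le> length (drop i vs)" using lv True by simp
      have "drop i (vs @ y) = drop i vs @ y" using lv True by simp
      also have "take r \<dots> = take r (drop i vs)" using h by simp
      finally have eq: "take r (drop i (vs @ y)) = take r (drop i vs)" .
      have "take r (drop i vs) \<in> oriented_edges r E" using win True by blast
      thus ?thesis unfolding eq .
    next
      case False
      define t where "t = i - k*r"
      have t: "t \<le> r" "i = k*r + t" using False i unfolding t_def by auto
      have "drop i (vs @ y) = drop t z @ y"
        using lv t by (simp add: add.commute flip: drop_drop)
      hence "take r (drop i (vs @ y)) = drop t z @ take t y"
        using t zy unfolding tight_step_def oriented_edges_def by auto
      thus ?thesis using window_mix[OF zy t(1)] by simp
    qed
  qed
  thus ?case by blast
qed


definition Tset :: "nat \<Rightarrow> 'a set set \<Rightarrow> nat \<Rightarrow> 'a list \<Rightarrow> 'a list set" where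
  "Tset r E j z = {w \<in> oriented_edges r E. drop j w = drop j z \<and> (z,w) \<in> (tight_step r E)^^j}"

lemma T_card:
  fixes E :: "'a set set"
  assumes rg: "r_graph r V E" and gd: "goodc c E" and c: "c \<ge> 0" and z: "z \<in> oriented_edges r E"
  shows "j \<le> r \<Longrightarrow> c ^ j \<le> real (card (Tset r E j z))"
proof (induction j)
  case 0
  have "Tset r E 0 z = {z}" using z unfolding Tset_def by auto
  thus ?case by simp
next
  case (Suc j)
  hence jr: "j < r" by simp
  define A where "A = Tset r E j z"
  define C where "C = (\<lambda>w. {u. u \<notin> set w - {w ! j} \<and> insert u (set w - {w ! j}) \<in> E})"
  have IH: "c ^ j \<le> real (card A)" using Suc A_def by simp
  have finOE: "finite (oriented_edges r E)" using finite_OE[OF rg] by simp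
  have finA: "finite A" unfolding A_def Tset_def by (rule finite_subset[OF _ finOE]) auto
  have fV: "finite V" using rg unfolding r_graph_def by auto
  have finC: "finite (C w)" for w
  proof (rule finite_subset[OF _ fV])
    show "C w \<subseteq> V" using rg unfolding C_def r_graph_def by auto
  qed
  have Aprops: "w \<in> oriented_edges r E" "drop j w = drop j z" "(z,w) \<in> (tight_step r E)^^j"
    if "w \<in> A" for w using that unfolding A_def Tset_def by auto
  have cC: "c \<le> real (card (C w))" if "w \<in> A" for w
  proof -
    have "set w \<in> E" "w ! j \<in> set w" using OE_props[OF rg Aprops(1)[OF that]] jr by auto
    thus ?thesis using gd unfolding goodc_def codeg_def C_def by blast
  qed
  define \<Phi> :: "'a list \<times> 'a \<Rightarrow> 'a list" where "\<Phi> = (\<lambda>(w,u). w[j := u])"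
  have inj: "inj_on \<Phi> (SIGMA w:A. C w)"
  proof (rule inj_onI)
    fix p q assume p: "p \<in> (SIGMA w:A. C w)" and q: "q \<in> (SIGMA w:A. C w)" and eqp: "\<Phi> p = \<Phi> q"
    obtain w u where pw: "p = (w,u)" by fastforce
    obtain w' u' where qw: "q = (w',u')" by fastforce
    have w: "w \<in> A" "u \<in> C w" "w' \<in> A" "u' \<in> C w'" using p q pw qw by auto
    have eq: "w[j := u] = w'[j := u']" using eqp pw qw unfolding \<Phi>_def by simp
    have lw: "length w = r" "length w' = r" using OE_props(1)[OF rg Aprops(1)] w by auto
    have "w[j := u] ! j = w'[j := u'] ! j" using eq by simp
    hence uu: "u = u'" using lw jr by simp
    have lz: "length z = r" using OE_props(1)[OF rg z] .
    have "drop j w ! 0 = drop j z ! 0" "drop j w' ! 0 = drop j z ! 0"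
      using Aprops(2)[OF w(1)] Aprops(2)[OF w(3)] by simp_all
    hence wj: "w ! j = z ! j" "w' ! j = z ! j" using lw lz jr by (simp_all add: nth_drop)
    have "w = w'"
    proof (rule nth_equalityI)
      show "length w = length w'" using lw by simp
      fix i assume "i < length w"
      show "w ! i = w' ! i"
      proof (cases "i = j")
        case True thus ?thesis using wj by simp
      next
        case False
        have "w[j := u] ! i = w'[j := u'] ! i" using eq by simp
        thus ?thesis using False by simp
      qed
    qed
    thus "p = q" using uu pw qw by simp
  qed
  have img: "\<Phi> ` (SIGMA w:A. C w) \<subseteq> Tset r E (Suc j) z"
  proof (clarsimp simp: \<Phi>_def)
    fix w u assume w: "w \<in> A" "u \<in> C w"
    have wo: "w \<in> oriented_edges r E" using Aprops w by auto
    note wp = OE_props[OF rg wo]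
    have set_up: "set (w[j := u]) = insert u (set w - {w ! j})"
      using set_update_distinct[OF wp(2)] wp(1) jr by simp
    have wu: "w[j := u] \<in> oriented_edges r E"
      using wp(1) set_up w(2) unfolding C_def oriented_edges_def by auto
    have "{i. i < r \<and> w ! i \<noteq> w[j := u] ! i} \<subseteq> {j}"
    proof
      fix i assume "i \<in> {i. i < r \<and> w ! i \<noteq> w[j := u] ! i}"
      thus "i \<in> {j}" by (cases "i = j") auto
    qed
    hence "card {i. i < r \<and> w ! i \<noteq> w[j := u] ! i} \<le> 1"
      using card_mono[of "{j}"] by fastforce
    hence st: "(w, w[j := u]) \<in> tight_step r E" using wo wu unfolding tight_step_def by auto
    have "(z, w[j := u]) \<in> (tight_step r E)^^(Suc j)" using Aprops(3)[OF w(1)] st by auto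
    moreover have "drop (Suc j) (w[j := u]) = drop (Suc j) z"
    proof -
      have "drop (Suc j) (w[j := u]) = drop (Suc j) w" by simp
      also have "\<dots> = drop 1 (drop j w)" by simp
      also have "\<dots> = drop 1 (drop j z)" using Aprops(2)[OF w(1)] by simp
      finally show ?thesis by simp
    qed
    ultimately show "w[j := u] \<in> Tset r E (Suc j) z" using wu unfolding Tset_def by auto
  qed
  have finT: "finite (Tset r E (Suc j) z)" unfolding Tset_def by (rule finite_subset[OF _ finOE]) auto
  have "card (SIGMA w:A. C w) = card (\<Phi> ` (SIGMA w:A. C w))" using card_image[OF inj] by simp
  also have "\<dots> \<le> card (Tset r E (Suc j) z)" using card_mono[OF finT img] .
  finally have le1: "real (card (SIGMA w:A. C w)) \<le> real (card (Tset r E (Suc j) z))" by simp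
  have "real (card (SIGMA w:A. C w)) = (\<Sum>w\<in>A. real (card (C w)))" using finA finC by simp
  also have "\<dots> \<ge> real (card A) * c" using sum_bounded_below[of A c "\<lambda>w. real (card (C w))"] cC by simp
  finally have le2: "real (card A) * c \<le> real (card (SIGMA w:A. C w))" .
  have "c ^ Suc j = c ^ j * c" by simp
  also have "\<dots> \<le> real (card A) * c" using IH c by (intro mult_right_mono) auto
  finally show ?case using le1 le2 by linarith
qed


lemma short_walk:
  fixes E :: "'a set set" and \<epsilon> :: real
  assumes rg: "r_graph r V E" and r1: "r \<ge> 1" and ep: "\<epsilon> > 0"
    and gd: "goodc (\<epsilon> * real (card V)) E" and tc: "tightly_connected r E x y"
  shows "\<exists>s::nat. real s \<le> (2 * real r + 1) / \<epsilon> ^ r \<and> (\<exists>vs. tight_walk_from_to r E (s * r) vs x y)"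
proof -
  let ?R = "tight_step r E"
  let ?n = "real (card V)"
  have x: "x \<in> oriented_edges r E" and y: "y \<in> oriented_edges r E" and xy: "(x,y) \<in> ?R\<^sup>*"
    using tc unfolding tightly_connected_def by auto
  obtain m where "(x,y) \<in> ?R^^m" using xy rtrancl_power by blast
  define k where "k = (LEAST m. (x,y) \<in> ?R^^m)"
  have xyk: "(x,y) \<in> ?R^^k" unfolding k_def by (rule LeastI) fact
  have kmin: "k \<le> m'" if "(x,y) \<in> ?R^^m'" for m' unfolding k_def by (rule Least_le) fact
  obtain vs where vs: "tight_walk_from_to r E (k*r) vs x y" using walk_lemma[OF x xyk] by blast
  have fV: "finite V" using rg unfolding r_graph_def by auto
  have "set x \<subseteq> V" "length x = r" using OE_props[OF rg x] by auto
  hence "V \<noteq> {}" using r1 by (cases x) auto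
  hence npos: "?n > 0" using fV by (simp add: card_gt_0_iff)
  obtain f where f: "f 0 = x" "f k = y" "\<forall>i<k. (f i, f (Suc i)) \<in> ?R"
    using xyk relpow_fun_conv by metis
  have piece: "a \<le> b \<Longrightarrow> b \<le> k \<Longrightarrow> (f a, f b) \<in> ?R^^(b - a)" for a b
  proof (induction b)
    case 0 thus ?case by simp
  next
    case (Suc b)
    show ?case
    proof (cases "a = Suc b")
      case True thus ?thesis by simp
    next
      case False
      hence "a \<le> b" using Suc by simp
      hence "(f a, f b) \<in> ?R^^(b - a)" using Suc by simp
      moreover have "(f b, f (Suc b)) \<in> ?R" using f(3) Suc by simp
      ultimately have "(f a, f (Suc b)) \<in> ?R^^Suc (b - a)" by auto
      moreover have "Suc (b - a) = Suc b - a" using \<open>a \<le> b\<close> by simp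
      ultimately show ?thesis by simp
    qed
  qed
  have fOE: "f i \<in> oriented_edges r E" if "i \<le> k" for i
  proof (cases "i < k")
    case True thus ?thesis using f(3) unfolding tight_step_def by auto
  next
    case False thus ?thesis using that f(2) y by simp
  qed
  define D where "D = 2 * r + 1"
  define q where "q = k div D"
  define B where "B = (\<lambda>i. Tset r E r (f (i * D)))"
  have iD: "i * D \<le> k" if "i \<le> q" for i
  proof -
    have "i * D \<le> q * D" using that by simp
    also have "\<dots> \<le> k" unfolding q_def by simp
    finally show ?thesis .
  qed
  have Bcard: "(\<epsilon> * ?n) ^ r \<le> real (card (B i))" if "i \<le> q" for i
    unfolding B_def using T_card[OF rg gd _ fOE[OF iD[OF that]], of r] ep npos by simp
  have symR: "\<And>a b. (a,b) \<in> ?R \<Longrightarrow> (b,a) \<in> ?R" by (rule tight_step_sym)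
  have disj: "B i \<inter> B i' = {}" if ii: "i < i'" "i' \<le> q" for i i'
  proof (rule ccontr)
    assume "B i \<inter> B i' \<noteq> {}"
    then obtain w where w1: "(f (i*D), w) \<in> ?R^^r" and w2': "(f (i'*D), w) \<in> ?R^^r"
      unfolding B_def Tset_def by auto
    have w2: "(w, f (i'*D)) \<in> ?R^^r" by (rule relpow_sym[OF symR w2'])
    have le: "i * D \<le> i' * D" "i' * D \<le> k" using ii iD by auto
    have p1: "(x, f (i*D)) \<in> ?R^^(i*D)" using piece[of 0 "i*D"] le f(1) by simp
    have p2: "(f (i'*D), y) \<in> ?R^^(k - i'*D)" using piece[of "i'*D" k] le f(2) by simp
    have "(x, y) \<in> ?R^^(i*D) O ?R^^r O ?R^^r O ?R^^(k - i'*D)" using p1 w1 w2 p2 by blast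
    hence "(x, y) \<in> ?R^^(i*D + (r + (r + (k - i'*D))))" by (simp add: relpow_add O_assoc)
    hence "k \<le> i*D + (r + (r + (k - i'*D)))" by (rule kmin)
    moreover have "i * D + D \<le> i' * D" using ii mult_le_mono1[of "Suc i" i' D] by simp
    ultimately show False using le unfolding D_def by linarith
  qed
  have finB: "finite (B i)" for i
    unfolding B_def Tset_def by (rule finite_subset[OF _ finite_OE(1)[OF rg]]) auto
  have "card (\<Union>i\<in>{..q}. B i) = (\<Sum>i\<in>{..q}. card (B i))"
  proof (rule card_UN_disjoint)
    show "finite {..q}" by simp
    show "\<forall>i\<in>{..q}. finite (B i)" using finB by simp
    show "\<forall>i\<in>{..q}. \<forall>j\<in>{..q}. i \<noteq> j \<longrightarrow> B i \<inter> B j = {}"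
    proof (intro ballI impI)
      fix i j assume "i \<in> {..q}" "j \<in> {..q}" "i \<noteq> j"
      thus "B i \<inter> B j = {}"
      proof (cases "i < j")
        case True thus ?thesis using disj \<open>j \<in> {..q}\<close> by simp
      next
        case False
        hence "j < i" using \<open>i \<noteq> j\<close> by simp
        hence "B j \<inter> B i = {}" using disj \<open>i \<in> {..q}\<close> by simp
        thus ?thesis by blast
      qed
    qed
  qed
  moreover have "(\<Union>i\<in>{..q}. B i) \<subseteq> oriented_edges r E" unfolding B_def Tset_def by auto
  hence "card (\<Union>i\<in>{..q}. B i) \<le> card V ^ r"
    using card_mono[OF finite_OE(1)[OF rg]] finite_OE(2)[OF rg] le_trans by blast
  ultimately have "(\<Sum>i\<in>{..q}. card (B i)) \<le> card V ^ r" by simp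
  hence "real (\<Sum>i\<in>{..q}. card (B i)) \<le> real (card V ^ r)" by (simp only: of_nat_le_iff)
  hence sumle: "(\<Sum>i\<in>{..q}. real (card (B i))) \<le> ?n ^ r" by (simp only: of_nat_sum of_nat_power)
  have "real (card {..q}) * (\<epsilon> * ?n) ^ r \<le> (\<Sum>i\<in>{..q}. real (card (B i)))"
    by (rule sum_bounded_below) (simp add: Bcard)
  hence "(real q + 1) * (\<epsilon> ^ r * ?n ^ r) \<le> ?n ^ r" using sumle
    by (simp add: power_mult_distrib add.commute)
  hence "(real q + 1) * \<epsilon> ^ r * ?n ^ r \<le> 1 * ?n ^ r" by (simp add: mult.assoc)
  hence qe: "(real q + 1) * \<epsilon> ^ r \<le> 1" using npos
    by (metis mult_le_cancel_right zero_less_power not_less)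
  have h1: "k = q * D + k mod D" unfolding q_def by simp
  have h2: "k mod D < D" unfolding D_def by simp
  have h3: "(q+1)*D = q*D + D" by simp
  have "k < (q + 1) * D" using h1 h2 h3 by linarith
  hence "k \<le> (q + 1) * D" by simp
  hence "real k \<le> real ((q + 1) * D)" by (simp only: of_nat_le_iff)
  hence "real k \<le> (real q + 1) * real D" by (simp add: distrib_right)
  also have "\<dots> \<le> real D / \<epsilon> ^ r"
  proof -
    have "(real q + 1) * real D * \<epsilon> ^ r = ((real q + 1) * \<epsilon> ^ r) * real D" by simp
    also have "\<dots> \<le> 1 * real D" using qe by (intro mult_right_mono) auto
    finally show ?thesis using ep by (simp add: pos_le_divide_eq)
  qed
  finally have "real k \<le> (2 * real r + 1) / \<epsilon> ^ r" unfolding D_def by (simp add: add.commute)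
  thus ?thesis using vs by blast
qed


theorem proposition4p1:
  fixes r :: nat and V :: "'a set" and E :: "'a set set" and \<epsilon> :: real
  assumes "r \<ge> 1" and "r_graph r V E" and "\<epsilon> > 0"
  shows "\<exists>E' \<subseteq> E. real (card (E - E')) \<le> \<epsilon> * real (card V) ^ r \<and>
           (\<forall>x y. tightly_connected r E' x y \<longrightarrow>
              (\<exists>s::nat. real s \<le> (2 * real r + 1) / \<epsilon> ^ r \<and>
                 (\<exists>vs. tight_walk_from_to r E' (s * r) vs x y)))"
proof -
  have fV: "finite V" using assms(2) unfolding r_graph_def by auto
  have EV: "E \<subseteq> Pow V" using assms(2) unfolding r_graph_def by auto
  have finE: "finite E" using finite_subset[OF EV] fV by auto
  have eprops: "\<forall>e\<in>E. finite e \<and> card e = r"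
    using assms(2) fV finite_subset unfolding r_graph_def by blast
  have c0: "\<epsilon> * real (card V) \<ge> 0" using assms(3) by simp
  obtain E' where E': "E' \<subseteq> E" "goodc (\<epsilon> * real (card V)) E'"
    "real (card (E - E')) \<le> \<epsilon> * real (card V) * real (card (shadow E))"
    using deletion[OF assms(1) c0 finE eprops] by blast
  have "shadow E \<subseteq> {T. T \<subseteq> V \<and> card T = r - 1}"
    unfolding shadow_def using eprops EV by auto
  hence "card (shadow E) \<le> card {T. T \<subseteq> V \<and> card T = r - 1}"
    using fV by (intro card_mono) auto
  also have "\<dots> = card V choose (r - 1)" using n_subsets[OF fV] .
  also have "\<dots> \<le> card V ^ (r - 1)"
  proof (cases "r - 1 \<le> card V")
    case True thus ?thesis by (rule binomial_le_pow)
  next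
    case False
    hence "card V < r - 1" by simp
    hence z: "card V choose (r - 1) = 0" by (rule binomial_eq_0)
    show ?thesis unfolding z by (rule le0)
  qed
  finally have "real (card (shadow E)) \<le> real (card V) ^ (r - 1)"
    by (metis of_nat_le_iff of_nat_power)
  hence "\<epsilon> * real (card V) * real (card (shadow E)) \<le> \<epsilon> * real (card V) * real (card V) ^ (r - 1)"
    using c0 by (intro mult_left_mono) auto
  also have "\<dots> = \<epsilon> * real (card V) ^ r"
    using assms(1) by (cases r) auto
  finally have cost: "real (card (E - E')) \<le> \<epsilon> * real (card V) ^ r" using E'(3) by linarith
  have rg': "r_graph r V E'" using assms(2) E'(1) unfolding r_graph_def by auto
  show ?thesis
    using E'(1) cost short_walk[OF rg' assms(1) assms(3) E'(2)] by blast
qed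

end
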